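(* For CC-MAR, the price of stability is 1; that is, in every instance there is a Nash equilibrium whose total cost equals the minimum total cost over all strategy profiles (in fact every minimum-total-cost strategy profile is a Nash equilibrium).
   Context: A mixed graph $G=(V,E,A)$ has undirected edges $E\subseteq\binom{V}{2}$ with positive integer weights $w_e$ and arcs $A\subseteq V\times V$. A path is a sequence of pairwise distinct vertices in which consecutive vertices are joined by an edge or by an arc in the forward direction. A CC-MAR instance is $(G,\mathcal{T})$ with $\mathcal{T}$ a multiset of $k$ pairs $(s_i,t_i)$, each connected by some path. A strategy profile $\mathcal{P}=\{P_1,\dots,P_k\}$ consists of $s_i$-$t_i$ paths. For $\{u,v\}\in E$, $x_{uv}$ is the number of paths traversing it from $u$ to $v$. Agent $i$'s cost is $\sum w_{uv}x_{vu}$ over edges $\{u,v\}$ traversed by $P_i$ from $u$ to $v$; total cost is $\mathrm{cost}(\mathcal{P})=\sum_{\{u,v\}\in E}w_{uv}x_{uv}x_{vu}$. A Nash equilibrium is a profile where no agent can strictly lower its own cost by unilaterally changing its path. The price of stability is the ratio of the minimum total cost of a Nash equilibrium to the minimum total cost of any profile. *)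

theory Defs
  imports Main
begin

definition mixed_graph ::
  "'v set \<Rightarrow> 'v set set \<Rightarrow> ('v set \<Rightarrow> nat) \<Rightarrow> ('v \<times> 'v) set \<Rightarrow> bool" where
  "mixed_graph V E w A \<longleftrightarrow>
     finite V
   \<and> (\<forall>e\<in>E. \<exists>u v. u \<in> V \<and> v \<in> V \<and> u \<noteq> v \<and> e = {u, v})
   \<and> (\<forall>e\<in>E. w e > 0)
   \<and> A \<subseteq> V \<times> V"

definition steps :: "'v list \<Rightarrow> ('v \<times> 'v) set" where
  "steps p = set (zip p (tl p))"

definition is_path :: "'v set \<Rightarrow> 'v set set \<Rightarrow> ('v \<times> 'v) set \<Rightarrow> 'v list \<Rightarrow> bool" where
  "is_path V E A p \<longleftrightarrow> p \<noteq> [] \<and> distinct p \<and> set p \<subseteq> V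
     \<and> (\<forall>(u, v) \<in> steps p. {u, v} \<in> E \<or> (u, v) \<in> A)"

definition is_st_path ::
  "'v set \<Rightarrow> 'v set set \<Rightarrow> ('v \<times> 'v) set \<Rightarrow> 'v \<Rightarrow> 'v \<Rightarrow> 'v list \<Rightarrow> bool" where
  "is_st_path V E A s t p \<longleftrightarrow> is_path V E A p \<and> hd p = s \<and> last p = t"

definition is_profile ::
  "'v set \<Rightarrow> 'v set set \<Rightarrow> ('v \<times> 'v) set \<Rightarrow> ('v \<times> 'v) list \<Rightarrow> 'v list list \<Rightarrow> bool" where
  "is_profile V E A T P \<longleftrightarrow> length P = length T
     \<and> (\<forall>i < length T. is_st_path V E A (fst (T ! i)) (snd (T ! i)) (P ! i))"

definition flow :: "'v set set \<Rightarrow> 'v list list \<Rightarrow> 'v \<Rightarrow> 'v \<Rightarrow> nat" where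
  "flow E P u v = card {i. i < length P \<and> {u, v} \<in> E \<and> (u, v) \<in> steps (P ! i)}"

definition agent_cost ::
  "'v set set \<Rightarrow> ('v set \<Rightarrow> nat) \<Rightarrow> 'v list list \<Rightarrow> nat \<Rightarrow> nat" where
  "agent_cost E w P i =
     (\<Sum>(u, v) \<in> {(u, v). (u, v) \<in> steps (P ! i) \<and> {u, v} \<in> E}. w {u, v} * flow E P v u)"

(* an (arbitrary) ordered pair of endpoints of an edge; the product
   x_uv * x_vu does not depend on the choice *)
definition ends :: "'v set \<Rightarrow> 'v \<times> 'v" where
  "ends e = (SOME (u, v). e = {u, v})"

definition total_cost :: "'v set set \<Rightarrow> ('v set \<Rightarrow> nat) \<Rightarrow> 'v list list \<Rightarrow> nat" where
  "total_cost E w P =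
     (\<Sum>e\<in>E. w e * flow E P (fst (ends e)) (snd (ends e)) * flow E P (snd (ends e)) (fst (ends e)))"

definition nash_eq ::
  "'v set \<Rightarrow> 'v set set \<Rightarrow> ('v set \<Rightarrow> nat) \<Rightarrow> ('v \<times> 'v) set \<Rightarrow> ('v \<times> 'v) list \<Rightarrow> 'v list list \<Rightarrow> bool" where
  "nash_eq V E w A T P \<longleftrightarrow> is_profile V E A T P
     \<and> (\<forall>i < length T. \<forall>p'. is_st_path V E A (fst (T ! i)) (snd (T ! i)) p'
          \<longrightarrow> \<not> agent_cost E w (P[i := p']) i < agent_cost E w P i)"

definition optimal_profile ::
  "'v set \<Rightarrow> 'v set set \<Rightarrow> ('v set \<Rightarrow> nat) \<Rightarrow> ('v \<times> 'v) set \<Rightarrow> ('v \<times> 'v) list \<Rightarrow> 'v list list \<Rightarrow> bool" where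
  "optimal_profile V E w A T P \<longleftrightarrow> is_profile V E A T P
     \<and> (\<forall>Q. is_profile V E A T Q \<longrightarrow> total_cost E w P \<le> total_cost E w Q)"

end

theory Submission
  imports Defs
begin

definition DD :: "'v set set \<Rightarrow> ('v \<times> 'v) set" where
  "DD E = {(u, v). {u, v} \<in> E}"

definition fw :: "'v set set \<Rightarrow> 'v list list \<Rightarrow> nat \<Rightarrow> 'v \<Rightarrow> 'v \<Rightarrow> nat" where
  "fw E P i u v = card {j. j < length P \<and> j \<noteq> i \<and> {u, v} \<in> E \<and> (u, v) \<in> steps (P ! j)}"

lemma steps_distinct:
  assumes "distinct p" "(a, b) \<in> steps p"
  shows "(b, a) \<notin> steps p"
proof
  assume "(b, a) \<in> steps p"
  then obtain m where m: "p ! m = b" "tl p ! m = a" "m < length p" "m < length (tl p)"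
    unfolding steps_def in_set_zip by auto
  from assms(2) obtain k where k: "p ! k = a" "tl p ! k = b" "k < length p" "k < length (tl p)"
    unfolding steps_def in_set_zip by auto
  have "p ! Suc m = a" "p ! Suc k = b" using m k by (auto simp: nth_tl)
  then have "Suc m = k" "Suc k = m" using m k assms(1)
    by (auto simp: nth_eq_iff_index_eq)
  then show False by simp
qed

lemma flow_split:
  assumes "i < length P"
  shows "flow E P u v = fw E P i u v + (if {u, v} \<in> E \<and> (u, v) \<in> steps (P ! i) then 1 else 0)"
proof -
  let ?S = "{j. j < length P \<and> j \<noteq> i \<and> {u, v} \<in> E \<and> (u, v) \<in> steps (P ! j)}"
  let ?C = "if {u, v} \<in> E \<and> (u, v) \<in> steps (P ! i) then {i} else {}"
  have eq: "{i. i < length P \<and> {u, v} \<in> E \<and> (u, v) \<in> steps (P ! i)} = ?S \<union> ?C"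
    using assms by auto
  have "card (?S \<union> ?C) = card ?S + card ?C"
    by (rule card_Un_disjoint) auto
  then show ?thesis unfolding flow_def fw_def eq by auto
qed

lemma fw_upd: "fw E (P[i := q]) i u v = fw E P i u v"
  unfolding fw_def by (rule arg_cong[where f=card]) auto

lemma finite_E: "mixed_graph V E w A \<Longrightarrow> finite E"
  unfolding mixed_graph_def
  by (metis (no_types, lifting) Pow_iff finite_Pow_iff finite_subset insert_subset subsetI empty_subsetI)

lemma DD_sub: "mixed_graph V E w A \<Longrightarrow> DD E \<subseteq> V \<times> V"
  unfolding mixed_graph_def DD_def by (auto dest!: bspec[where x="{_,_}"] simp: doubleton_eq_iff; blast)

lemma finite_DD: "mixed_graph V E w A \<Longrightarrow> finite (DD E)"
  using DD_sub by (metis finite_SigmaI finite_subset mixed_graph_def)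

lemma sum_DD_swap:
  "(\<Sum>(u, v)\<in>DD E. f v u) = (\<Sum>(u, v)\<in>DD E. (f u v :: nat))"
proof -
  have img: "prod.swap ` DD E = DD E" unfolding DD_def by (auto simp: insert_commute image_iff)
  have "(\<Sum>(u, v)\<in>DD E. f u v) = (\<Sum>(u, v)\<in>prod.swap ` DD E. f u v)" using img by simp
  also have "\<dots> = (\<Sum>x\<in>DD E. (\<lambda>(u, v). f u v) (prod.swap x))"
    by (subst sum.reindex) (auto simp: comp_def)
  also have "\<dots> = (\<Sum>(u, v)\<in>DD E. f v u)" by (rule sum.cong) auto
  finally show ?thesis by simp
qed

lemma total_double:
  assumes mg: "mixed_graph V E w A"
  shows "2 * total_cost E w P = (\<Sum>(u, v)\<in>DD E. w {u, v} * flow E P u v * flow E P v u)"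
proof -
  let ?f = "\<lambda>u v. w {u, v} * flow E P u v * flow E P v u"
  have sym: "?f u v = ?f v u" for u v by (simp add: insert_commute)
  have fE: "finite E" using finite_E[OF mg] .
  have fD: "finite (DD E)" using finite_DD[OF mg] .
  have img: "(\<lambda>(u, v). {u, v}) ` DD E \<subseteq> E" unfolding DD_def by auto
  have "(\<Sum>(u, v)\<in>DD E. ?f u v) = (\<Sum>e\<in>E. \<Sum>x\<in>{x \<in> DD E. (\<lambda>(u, v). {u, v}) x = e}. (\<lambda>(u,v). ?f u v) x)"
    by (rule sum.group[OF fD fE img, symmetric])
  also have "\<dots> = (\<Sum>e\<in>E. 2 * (w e * flow E P (fst (ends e)) (snd (ends e)) * flow E P (snd (ends e)) (fst (ends e))))"
  proof (rule sum.cong[OF refl])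
    fix e assume e: "e \<in> E"
    then obtain a b where ab: "a \<noteq> b" "e = {a, b}" using mg unfolding mixed_graph_def by blast
    have en: "ends e = (a, b) \<or> ends e = (b, a)"
    proof -
      have "\<exists>x. (case x of (u, v) \<Rightarrow> e = {u, v})" using ab by auto
      then have "(case ends e of (u, v) \<Rightarrow> e = {u, v})" unfolding ends_def by (rule someI_ex)
      then show ?thesis using ab by (cases "ends e") (auto simp: doubleton_eq_iff)
    qed
    have set: "{x \<in> DD E. (\<lambda>(u, v). {u, v}) x = e} = {(a, b), (b, a)}"
      using ab e unfolding DD_def by (auto simp: doubleton_eq_iff insert_commute)
    have "(\<Sum>x\<in>{(a, b), (b, a)}. (\<lambda>(u,v). ?f u v) x) = ?f a b + ?f b a"
      using ab by simp
    also have "\<dots> = 2 * ?f a b" by (simp only: mult_2 sym[of a b])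
    finally have F: "(\<Sum>x\<in>{(a, b), (b, a)}. (\<lambda>(u,v). ?f u v) x) = 2 * ?f a b" .
    have G: "?f (fst (ends e)) (snd (ends e)) = ?f a b" using en
    proof
      assume h: "ends e = (a, b)" show ?thesis by (simp only: h prod.sel)
    next
      assume h: "ends e = (b, a)" show ?thesis by (simp only: h prod.sel sym[of a b])
    qed
    show "(\<Sum>x\<in>{x \<in> DD E. (\<lambda>(u, v). {u, v}) x = e}. (\<lambda>(u,v). ?f u v) x)
       = 2 * (w e * flow E P (fst (ends e)) (snd (ends e)) * flow E P (snd (ends e)) (fst (ends e)))"
    proof -
      have "(\<Sum>x\<in>{x \<in> DD E. (\<lambda>(u, v). {u, v}) x = e}. (\<lambda>(u,v). ?f u v) x) = 2 * ?f a b"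
        using set F by simp
      also have "\<dots> = 2 * ?f (fst (ends e)) (snd (ends e))" using G by simp
      also have "\<dots> = 2 * (w e * flow E P (fst (ends e)) (snd (ends e)) * flow E P (snd (ends e)) (fst (ends e)))"
        using en
      proof
        assume h: "ends e = (a, b)" show ?thesis unfolding h prod.sel unfolding ab(2) ..
      next
        have c: "{b, a} = {a, b}" by (rule insert_commute)
        assume h: "ends e = (b, a)" show ?thesis unfolding h prod.sel unfolding ab(2) c ..
      qed
      finally show ?thesis .
    qed
  qed
  also have "\<dots> = 2 * total_cost E w P" unfolding total_cost_def by (simp add: sum_distrib_left)
  finally show ?thesis by simp
qed

lemma agent_DD:
  assumes mg: "mixed_graph V E w A"
  shows "agent_cost E w P i = (\<Sum>(u, v)\<in>DD E. if (u, v) \<in> steps (P ! i) then w {u, v} * flow E P v u else 0)"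
proof -
  have "(\<Sum>(u, v)\<in>DD E. if (u, v) \<in> steps (P ! i) then w {u, v} * flow E P v u else 0)
     = (\<Sum>x\<in>DD E. if x \<in> steps (P ! i) then (\<lambda>(u,v). w {u, v} * flow E P v u) x else 0)"
    by (rule sum.cong) auto
  also have "\<dots> = (\<Sum>x\<in>{x \<in> DD E. x \<in> steps (P ! i)}. (\<lambda>(u,v). w {u, v} * flow E P v u) x)"
    by (rule sum.inter_filter[OF finite_DD[OF mg], symmetric])
  also have "{x \<in> DD E. x \<in> steps (P ! i)} = {(u, v). (u, v) \<in> steps (P ! i) \<and> {u, v} \<in> E}"
    unfolding DD_def by auto
  finally show ?thesis unfolding agent_cost_def by simp
qed

lemma potential:
  assumes mg: "mixed_graph V E w A" and i: "i < length P" and d: "distinct (P ! i)"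
  shows "2 * total_cost E w P = (\<Sum>(u, v)\<in>DD E. w {u, v} * fw E P i u v * fw E P i v u) + 2 * agent_cost E w P i"
proof -
  let ?q = "P ! i"
  let ?y = "fw E P i"
  let ?g = "\<lambda>u v. if (u, v) \<in> steps ?q then w {u, v} * ?y v u else 0"
  have pt: "w {u, v} * flow E P u v * flow E P v u = w {u, v} * ?y u v * ?y v u + ?g u v + ?g v u"
    if "(u, v) \<in> DD E" for u v
  proof -
    have uv: "{u, v} \<in> E" "{v, u} \<in> E" using that unfolding DD_def by (auto simp: insert_commute)
    show ?thesis
      using flow_split[OF i, of E u v] flow_split[OF i, of E v u] uv steps_distinct[OF d, of u v]
      by (auto simp: insert_commute algebra_simps)
  qed
  have ag: "?g u v = (if (u, v) \<in> steps ?q then w {u, v} * flow E P v u else 0)"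
    if "(u, v) \<in> DD E" for u v
  proof -
    have uv: "{v, u} \<in> E" using that unfolding DD_def by (auto simp: insert_commute)
    show ?thesis using flow_split[OF i, of E v u] uv steps_distinct[OF d, of u v] by auto
  qed
  have "2 * total_cost E w P = (\<Sum>(u, v)\<in>DD E. w {u, v} * ?y u v * ?y v u + ?g u v + ?g v u)"
    unfolding total_double[OF mg] by (rule sum.cong) (auto simp: pt)
  also have "\<dots> = (\<Sum>(u, v)\<in>DD E. w {u, v} * ?y u v * ?y v u) + (\<Sum>(u, v)\<in>DD E. ?g u v) + (\<Sum>(u, v)\<in>DD E. ?g v u)"
    by (simp add: sum.distrib split_def)
  also have "(\<Sum>(u, v)\<in>DD E. ?g v u) = (\<Sum>(u, v)\<in>DD E. ?g u v)" by (rule sum_DD_swap)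
  also have "(\<Sum>(u, v)\<in>DD E. ?g u v) = agent_cost E w P i"
    unfolding agent_DD[OF mg] by (rule sum.cong) (auto simp: ag)
  finally show ?thesis by simp
qed

lemma opt_nash:
  assumes mg: "mixed_graph V E w A" and opt: "optimal_profile V E w A T P"
  shows "nash_eq V E w A T P"
  unfolding nash_eq_def
proof (intro conjI allI impI)
  show pr: "is_profile V E A T P" using opt unfolding optimal_profile_def by simp
  fix i p'
  assume i: "i < length T" and p': "is_st_path V E A (fst (T ! i)) (snd (T ! i)) p'"
  let ?P' = "P[i := p']"
  have len: "length P = length T" using pr unfolding is_profile_def by simp
  have pr': "is_profile V E A T ?P'" using pr p' i unfolding is_profile_def
    by (auto simp: nth_list_update)
  have dP: "distinct (P ! i)" using pr i unfolding is_profile_def is_st_path_def is_path_def by auto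
  have dP': "distinct (?P' ! i)" using p' i len unfolding is_st_path_def is_path_def by auto
  have i': "i < length ?P'" using i len by simp
  have e1: "2 * total_cost E w ?P' = (\<Sum>(u, v)\<in>DD E. w {u, v} * fw E P i u v * fw E P i v u) + 2 * agent_cost E w ?P' i"
    using potential[OF mg i' dP'] by (simp add: fw_upd)
  have e2: "2 * total_cost E w P = (\<Sum>(u, v)\<in>DD E. w {u, v} * fw E P i u v * fw E P i v u) + 2 * agent_cost E w P i"
    using potential[OF mg _ dP] i len by simp
  have "total_cost E w P \<le> total_cost E w ?P'" using opt pr' unfolding optimal_profile_def by blast
  then show "\<not> agent_cost E w ?P' i < agent_cost E w P i" using e1 e2 by linarith
qed

theorem mainTheorem2:
  fixes V :: "'v set" and E :: "'v set set" and w :: "'v set \<Rightarrow> nat"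
    and A :: "('v \<times> 'v) set" and T :: "('v \<times> 'v) list"
  assumes "mixed_graph V E w A"
    and "\<forall>(s, t) \<in> set T. \<exists>p. is_st_path V E A s t p"
  shows "(\<forall>P. optimal_profile V E w A T P \<longrightarrow> nash_eq V E w A T P)
       \<and> (\<exists>P. nash_eq V E w A T P
             \<and> (\<forall>Q. is_profile V E A T Q \<longrightarrow> total_cost E w P \<le> total_cost E w Q))"
proof -
  have part1: "\<forall>P. optimal_profile V E w A T P \<longrightarrow> nash_eq V E w A T P"
    using opt_nash[OF assms(1)] by blast
  define P0 where "P0 = map (\<lambda>(s, t). SOME p. is_st_path V E A s t p) T"
  have "is_profile V E A T P0"
    unfolding is_profile_def P0_def
  proof (intro conjI allI impI)
    fix i assume i: "i < length T"
    then have "T ! i \<in> set T" by simp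
    moreover obtain s t where st: "T ! i = (s, t)" by (cases "T ! i")
    ultimately have "\<exists>p. is_st_path V E A s t p" using assms(2) by auto
    then show "is_st_path V E A (fst (T ! i)) (snd (T ! i)) (map (\<lambda>(s, t). SOME p. is_st_path V E A s t p) T ! i)"
      using i st by (auto intro: someI_ex)
  qed simp
  then have ex: "\<exists>n Q. is_profile V E A T Q \<and> total_cost E w Q = n" by blast
  define m where "m = (LEAST n. \<exists>Q. is_profile V E A T Q \<and> total_cost E w Q = n)"
  obtain P where P: "is_profile V E A T P" "total_cost E w P = m"
    using LeastI_ex[OF ex] unfolding m_def by blast
  have min: "\<forall>Q. is_profile V E A T Q \<longrightarrow> total_cost E w P \<le> total_cost E w Q"
    using P unfolding m_def by (auto intro: Least_le)
  then have "optimal_profile V E w A T P" using P unfolding optimal_profile_def by blast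
  then show ?thesis using part1 min by blast
qed

end
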